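(* Let $M$ be a finite rectangular monoid, $k$ a field which is a splitting field for the maximal subgroups of $M$, and $X,Y\in\Lambda(M)$ incomparable. Let $A$ be a $k[G_Y\times G_X^{op}]$-module, regarded as an $M$-bimodule via $m\cdot a\cdot m'=\rho_Y(m)a\rho_X(m')$. Then $H^1(M,A)\cong\mathrm{Hom}_{k[G_Y\times G_X^{op}]}(V_{X,Y},A)$, where $V_{X,Y}=k[e_YMe_X]/W_{X,Y}$ and $W_{X,Y}$ is the subspace spanned by $\nabla Y\nabla X\cap e_YMe_X$ together with all elements $e_Ymne_X+e_Yme_Ye_Xne_X-e_Yme_Yne_X-e_Yme_Xne_X$ with $m,n\in M$.
   Context: $E(M)$ idempotents, $m^\omega$ idempotent power of $m$. $M$ rectangular: each $\{f\in E(M):MfM=MeM\}$ closed under multiplication. $\Lambda(M)$: ideals $MeM$, $e\in E(M)$, ordered by inclusion; $\sigma(m)=Mm^\omega M$; $\nabla X=\{m: X\not\subseteq MmM\}$, $\nabla Y\nabla X=\{ab:a\in\nabla Y,b\in\nabla X\}$. Fixed $e_X$ with $Me_XM=X$; $G_X$ = group of units of $e_XMe_X$; $\rho_X(m)=e_Xme_X$ if $X\subseteq\sigma(m)$ and $0\in kG_X$ otherwise. $W_{X,Y}$ is a $G_Y\times G_X^{op}$-submodule of $k[e_YMe_X]$ (left multiplication by $G_Y$, right by $G_X$). $H^1(M,A)$ is the space of derivations $d\colon M\to A$ ($d(mn)=md(n)+d(m)n$) modulo inner derivations $m\mapsto ma-am$. *)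

theory Defs
  imports Main "Jordan_Normal_Form.Matrix"
begin

definition idems :: "'m::monoid_mult set" where
  "idems = {e. e * e = e}"

definition ideal2 :: "'m::monoid_mult \<Rightarrow> 'm set" where
  "ideal2 m = {a * m * b | a b. True}"

definition rectangular :: "'m::monoid_mult itself \<Rightarrow> bool" where
  "rectangular _ \<longleftrightarrow>
     (\<forall>e\<in>(idems::'m set). \<forall>f\<in>idems. \<forall>g\<in>idems.
        ideal2 f = ideal2 e \<and> ideal2 g = ideal2 e \<longrightarrow> f * g \<in> idems \<and> ideal2 (f * g) = ideal2 e)"

definition Lambda :: "'m::monoid_mult set set" where
  "Lambda = {ideal2 e | e. e \<in> idems}"

definition omega :: "'m::monoid_mult \<Rightarrow> 'm" where
  "omega m = (THE e. e * e = e \<and> (\<exists>n\<ge>1. e = m ^ n))"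

definition sigma :: "'m::monoid_mult \<Rightarrow> 'm set" where
  "sigma m = ideal2 (omega m)"

definition nabla :: "'m::monoid_mult set \<Rightarrow> 'm set" where
  "nabla X = {m. \<not> X \<subseteq> ideal2 m}"

definition nabla_prod :: "'m::monoid_mult set \<Rightarrow> 'm set \<Rightarrow> 'm set" where
  "nabla_prod Y X = {a * b | a b. a \<in> nabla Y \<and> b \<in> nabla X}"

definition corner :: "'m::monoid_mult \<Rightarrow> 'm \<Rightarrow> 'm set" where
  "corner e f = {e * m * f | m. True}"

(* group of units of eMe (maximal subgroup at e) *)
definition units_corner :: "'m::monoid_mult \<Rightarrow> 'm set" where
  "units_corner e = {g \<in> corner e e. \<exists>h\<in>corner e e. g * h = e \<and> h * g = e}"

definition is_rep :: "'m::monoid_mult set \<Rightarrow> 'm \<Rightarrow> nat \<Rightarrow> ('m \<Rightarrow> 'k::field mat) \<Rightarrow> bool" where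
  "is_rep G e n \<rho> \<longleftrightarrow> (\<forall>g\<in>G. \<rho> g \<in> carrier_mat n n) \<and> \<rho> e = 1\<^sub>m n \<and>
     (\<forall>g\<in>G. \<forall>h\<in>G. \<rho> (g * h) = \<rho> g * \<rho> h)"

definition irreducible_rep :: "'m::monoid_mult set \<Rightarrow> 'm \<Rightarrow> nat \<Rightarrow> ('m \<Rightarrow> 'k::field mat) \<Rightarrow> bool" where
  "irreducible_rep G e n \<rho> \<longleftrightarrow> is_rep G e n \<rho> \<and> n > 0 \<and>
     (\<forall>U. U \<subseteq> carrier_vec n \<and> 0\<^sub>v n \<in> U \<and> (\<forall>u\<in>U. \<forall>v\<in>U. u + v \<in> U) \<and>
          (\<forall>c. \<forall>u\<in>U. c \<cdot>\<^sub>v u \<in> U) \<and> (\<forall>g\<in>G. \<forall>u\<in>U. \<rho> g *\<^sub>v u \<in> U)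
        \<longrightarrow> U = {0\<^sub>v n} \<or> U = carrier_vec n)"

definition splitting_field :: "'k::field itself \<Rightarrow> 'm::monoid_mult set \<Rightarrow> 'm \<Rightarrow> bool" where
  "splitting_field _ G e \<longleftrightarrow>
     (\<forall>n (\<rho>::'m \<Rightarrow> 'k mat). irreducible_rep G e n \<rho> \<longrightarrow>
        (\<forall>T\<in>carrier_mat n n. (\<forall>g\<in>G. T * \<rho> g = \<rho> g * T) \<longrightarrow> (\<exists>c. T = c \<cdot>\<^sub>m 1\<^sub>m n)))"

(* A is a k[G_Y x G_X^op]-module: a k-vector space with commuting linear
   left G_Y-action lY and right G_X-action rX *)
definition group_bimodule ::
  "('k::field \<Rightarrow> 'a::ab_group_add \<Rightarrow> 'a) \<Rightarrow> 'm::monoid_mult set \<Rightarrow> 'm \<Rightarrow> 'm set \<Rightarrow> 'm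
   \<Rightarrow> ('m \<Rightarrow> 'a \<Rightarrow> 'a) \<Rightarrow> ('a \<Rightarrow> 'm \<Rightarrow> 'a) \<Rightarrow> bool" where
  "group_bimodule sc GY eY GX eX lY rX \<longleftrightarrow> vector_space sc \<and>
     (\<forall>g\<in>GY. \<forall>a b. lY g (a + b) = lY g a + lY g b) \<and>
     (\<forall>g\<in>GY. \<forall>c a. lY g (sc c a) = sc c (lY g a)) \<and>
     (\<forall>a. lY eY a = a) \<and>
     (\<forall>g\<in>GY. \<forall>h\<in>GY. \<forall>a. lY (g * h) a = lY g (lY h a)) \<and>
     (\<forall>g\<in>GX. \<forall>a b. rX (a + b) g = rX a g + rX b g) \<and>
     (\<forall>g\<in>GX. \<forall>c a. rX (sc c a) g = sc c (rX a g)) \<and>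
     (\<forall>a. rX a eX = a) \<and>
     (\<forall>g\<in>GX. \<forall>h\<in>GX. \<forall>a. rX a (g * h) = rX (rX a g) h) \<and>
     (\<forall>g\<in>GY. \<forall>h\<in>GX. \<forall>a. lY g (rX a h) = rX (lY g a) h)"

(* the M-bimodule structure m.a.m' = rho_Y(m) a rho_X(m') *)
definition lact :: "'m::monoid_mult set \<Rightarrow> 'm \<Rightarrow> ('m \<Rightarrow> 'a::ab_group_add \<Rightarrow> 'a) \<Rightarrow> 'm \<Rightarrow> 'a \<Rightarrow> 'a" where
  "lact Y eY lY m a = (if Y \<subseteq> sigma m then lY (eY * m * eY) a else 0)"

definition ract :: "'m::monoid_mult set \<Rightarrow> 'm \<Rightarrow> ('a::ab_group_add \<Rightarrow> 'm \<Rightarrow> 'a) \<Rightarrow> 'a \<Rightarrow> 'm \<Rightarrow> 'a" where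
  "ract X eX rX a m = (if X \<subseteq> sigma m then rX a (eX * m * eX) else 0)"

definition derivations ::
  "'m::monoid_mult set \<Rightarrow> 'm \<Rightarrow> ('m \<Rightarrow> 'a::ab_group_add \<Rightarrow> 'a) \<Rightarrow> 'm set \<Rightarrow> 'm
   \<Rightarrow> ('a \<Rightarrow> 'm \<Rightarrow> 'a) \<Rightarrow> ('m \<Rightarrow> 'a) set" where
  "derivations Y eY lY X eX rX =
     {d. \<forall>m n. d (m * n) = lact Y eY lY m (d n) + ract X eX rX (d m) n}"

definition inner_derivations ::
  "'m::monoid_mult set \<Rightarrow> 'm \<Rightarrow> ('m \<Rightarrow> 'a::ab_group_add \<Rightarrow> 'a) \<Rightarrow> 'm set \<Rightarrow> 'm
   \<Rightarrow> ('a \<Rightarrow> 'm \<Rightarrow> 'a) \<Rightarrow> ('m \<Rightarrow> 'a) set" where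
  "inner_derivations Y eY lY X eX rX =
     {d. \<exists>a. \<forall>m. d m = lact Y eY lY m a - ract X eX rX a m}"

(* the free k-vector space k[S] on a finite S, as functions supported in S *)
definition freevs :: "'m set \<Rightarrow> ('m \<Rightarrow> 'k::field) set" where
  "freevs S = {f. \<forall>t. t \<notin> S \<longrightarrow> f t = 0}"

definition delta :: "'m \<Rightarrow> 'm \<Rightarrow> 'k::field" where
  "delta s = (\<lambda>t. if t = s then 1 else 0)"

(* action of (g,h) in G_Y x G_X^op on k[e_Y M e_X]: basis s |-> g s h *)
definition gact :: "'m::monoid_mult set \<Rightarrow> 'm \<Rightarrow> 'm \<Rightarrow> ('m \<Rightarrow> 'k::field) \<Rightarrow> 'm \<Rightarrow> 'k" where
  "gact S g h f = (\<lambda>t. \<Sum>s\<in>S. if g * s * h = t then f s else 0)"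

definition W_gen :: "'m::monoid_mult set \<Rightarrow> 'm \<Rightarrow> 'm set \<Rightarrow> 'm \<Rightarrow> ('m \<Rightarrow> 'k::field) set" where
  "W_gen X eX Y eY =
     {delta s | s. s \<in> nabla_prod Y X \<inter> corner eY eX} \<union>
     {(\<lambda>t. delta (eY * m * n * eX) t + delta (eY * m * eY * eX * n * eX) t
           - delta (eY * m * eY * n * eX) t - delta (eY * m * eX * n * eX) t) | m n. True}"

definition W_XY :: "'m::{monoid_mult,finite} set \<Rightarrow> 'm \<Rightarrow> 'm set \<Rightarrow> 'm \<Rightarrow> ('m \<Rightarrow> 'k::field) set" where
  "W_XY X eX Y eY = {f. \<exists>c. f = (\<lambda>t. \<Sum>w\<in>W_gen X eX Y eY. c w * w t)}"

(* Hom_{k[G_Y x G_X^op]}(V_{X,Y}, A) with V_{X,Y} = k[e_Y M e_X]/W_{X,Y}, realised as the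
   k[G_Y x G_X^op]-linear maps k[e_Y M e_X] -> A vanishing on W_{X,Y}
   (extended by 0 outside k[e_Y M e_X]) *)
definition Hom_V ::
  "('k::field \<Rightarrow> 'a::ab_group_add \<Rightarrow> 'a) \<Rightarrow> 'm::{monoid_mult,finite} set \<Rightarrow> 'm \<Rightarrow> 'm set \<Rightarrow> 'm
   \<Rightarrow> ('m \<Rightarrow> 'a \<Rightarrow> 'a) \<Rightarrow> ('a \<Rightarrow> 'm \<Rightarrow> 'a) \<Rightarrow> (('m \<Rightarrow> 'k) \<Rightarrow> 'a) set" where
  "Hom_V sc X eX Y eY lY rX =
     {\<Phi>. (\<forall>f\<in>freevs (corner eY eX). \<forall>f'\<in>freevs (corner eY eX).
            \<Phi> (\<lambda>t. f t + f' t) = \<Phi> f + \<Phi> f') \<and>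
         (\<forall>c. \<forall>f\<in>freevs (corner eY eX). \<Phi> (\<lambda>t. c * f t) = sc c (\<Phi> f)) \<and>
         (\<forall>f. f \<notin> freevs (corner eY eX) \<longrightarrow> \<Phi> f = 0) \<and>
         (\<forall>w\<in>W_XY X eX Y eY. \<Phi> w = 0) \<and>
         (\<forall>g\<in>units_corner eY. \<forall>h\<in>units_corner eX. \<forall>f\<in>freevs (corner eY eX).
            \<Phi> (gact (corner eY eX) g h f) = lY g (rX (\<Phi> f) h))}"

(* H^1(M,A) = Der/Inn is k-linearly isomorphic to H: there is a k-linear map from
   Der onto H whose kernel is exactly Inn *)
definition H1_iso ::
  "('k::field \<Rightarrow> 'a::ab_group_add \<Rightarrow> 'a) \<Rightarrow> ('m \<Rightarrow> 'a) set \<Rightarrow> ('m \<Rightarrow> 'a) set \<Rightarrow> ('b \<Rightarrow> 'a) set \<Rightarrow> bool" where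
  "H1_iso sc Der Inn H \<longleftrightarrow>
     (\<exists>\<Psi>. \<Psi> ` Der = H \<and>
       (\<forall>d\<in>Der. \<forall>d'\<in>Der. \<Psi> (\<lambda>m. d m + d' m) = (\<lambda>f. \<Psi> d f + \<Psi> d' f)) \<and>
       (\<forall>c. \<forall>d\<in>Der. \<Psi> (\<lambda>m. sc c (d m)) = (\<lambda>f. sc c (\<Psi> d f))) \<and>
       (\<forall>d\<in>Der. \<Psi> d = (\<lambda>f. 0) \<longleftrightarrow> d \<in> Inn))"

end

theory Submission
  imports Defs
begin


lemma ideal2_iff: "x \<in> ideal2 y \<longleftrightarrow> (\<exists>a b. x = a * y * b)"
  by (auto simp: ideal2_def)

lemma ideal2_I: "x = a * y * b \<Longrightarrow> x \<in> ideal2 y"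
  by (auto simp: ideal2_def)

lemma ideal2_self: "x \<in> ideal2 x"
  by (rule ideal2_I[of _ 1 _ 1]) simp

lemma ideal2_trans: "x \<in> ideal2 y \<Longrightarrow> y \<in> ideal2 z \<Longrightarrow> x \<in> ideal2 z"
  unfolding ideal2_iff by (metis mult.assoc)

lemma ideal2_sub: "x \<in> ideal2 y \<Longrightarrow> ideal2 x \<subseteq> ideal2 y"
  using ideal2_trans by blast

lemma ideal2_eq_iff: "ideal2 x = ideal2 y \<longleftrightarrow> x \<in> ideal2 y \<and> y \<in> ideal2 x"
  using ideal2_sub ideal2_self by blast


lemma in_ideal2_mult_left: "a * x \<in> ideal2 x"
  by (rule ideal2_I[of _ a _ 1]) simp
lemma in_ideal2_mult_right: "x * a \<in> ideal2 x"
  by (rule ideal2_I[of _ 1 _ a]) simp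
lemma in_ideal2_mult_both: "a * x * b \<in> ideal2 x"
  by (rule ideal2_I) simp

lemma up_left: "e \<in> ideal2 (a * x) \<Longrightarrow> e \<in> ideal2 x"
  using ideal2_trans in_ideal2_mult_left by blast
lemma up_right: "e \<in> ideal2 (x * a) \<Longrightarrow> e \<in> ideal2 x"
  using ideal2_trans in_ideal2_mult_right by blast
lemma up_both: "e \<in> ideal2 (a * x * b) \<Longrightarrow> e \<in> ideal2 x"
  using ideal2_trans in_ideal2_mult_both by blast

lemma idem_ee: "e * e = (e::'m::monoid_mult) \<Longrightarrow> e * (e * z) = e * z"
  by (simp add: mult.assoc[symmetric])

lemma lassoc: "x * y = (z::'m::monoid_mult) \<Longrightarrow> x * (y * w) = z * w"
  by (simp add: mult.assoc[symmetric])

lemma idem_cornerE: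
  assumes e: "e * e = e" and x: "e * x * e = (x::'m::monoid_mult)"
  shows "e * x = x" "x * e = x"
proof -
  have "e * x = e * (e * x * e)" using x by simp
  also have "\<dots> = (e * e) * x * e" by (simp add: mult.assoc)
  finally show "e * x = x" using e x by simp
  have "x * e = (e * x * e) * e" using x by simp
  also have "\<dots> = e * x * (e * e)" by (simp add: mult.assoc)
  finally show "x * e = x" using e x by simp
qed

lemma corner_fin_inv:
  fixes e :: "'m::{monoid_mult,finite}"
  assumes e: "e * e = e" and p: "e * p * e = p" and q: "e * q * e = q" and pq: "p * q = e"
  shows "q * p = e"
proof -
  let ?C = "corner e e"
  have Cm: "y \<in> ?C \<longleftrightarrow> e * y * e = y" for y
  proof
    assume "y \<in> ?C"
    then obtain m where "y = e * m * e" by (auto simp: corner_def)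
    then show "e * y * e = y" using e by (simp add: mult.assoc idem_ee)
  next
    assume "e * y * e = y"
    then show "y \<in> ?C" unfolding corner_def by (metis (mono_tags, lifting) mem_Collect_eq)
  qed
  have qC: "q * y \<in> ?C" if "y \<in> ?C" for y
  proof -
    have ye: "y * e = y" using that Cm idem_cornerE[OF e] by blast
    have qe: "e * q = q" using idem_cornerE[OF e q] by blast
    have "e * (q * y) * e = (e * q) * (y * e)" by (simp add: mult.assoc)
    then show ?thesis using Cm qe ye by simp
  qed
  have "(\<lambda>y. q * y) ` ?C \<subseteq> ?C"
    using qC by blast
  moreover have "inj_on (\<lambda>y. q * y) ?C"
  proof (rule inj_onI)
    fix y1 y2 assume "y1 \<in> ?C" "y2 \<in> ?C" "q * y1 = q * y2"
    then have "p * q * y1 = p * q * y2" by (simp add: mult.assoc)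
    then have "e * y1 = e * y2" using pq by simp
    moreover have "e * y1 = y1" "e * y2 = y2" using \<open>y1 \<in> ?C\<close> \<open>y2 \<in> ?C\<close> Cm idem_cornerE[OF e] by blast+
    ultimately show "y1 = y2" by simp
  qed
  ultimately have "(\<lambda>y. q * y) ` ?C = ?C"
    by (intro endo_inj_surj) auto
  moreover have "e \<in> ?C" using Cm e by simp
  ultimately obtain y where y: "y \<in> ?C" "q * y = e" by force
  have "p = p * e" using idem_cornerE[OF e p] by simp
  also have "\<dots> = p * q * y" using y by (simp add: mult.assoc)
  also have "\<dots> = e * y" using pq by simp
  also have "\<dots> = y" using y Cm idem_cornerE[OF e] by blast
  finally show ?thesis using y by simp
qed

lemma stab:
  fixes e :: "'m::{monoid_mult,finite}"
  assumes e: "e * e = e" and x: "e * x * e = x" and up: "e \<in> ideal2 x"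
  shows "x \<in> units_corner e"
proof -
  obtain s t where st: "e = s * x * t" using up by (auto simp: ideal2_iff)
  define s' where "s' = e * s * e"
  define t' where "t' = e * t * e"
  have ee: "e * (e * z) = e * z" for z using e by (simp add: mult.assoc[symmetric])
  have xe: "x * e = x" and ex: "e * x = x" using idem_cornerE[OF e x] by auto
  have "e = e * e * e" using e by simp
  also have "\<dots> = e * s * x * t * e" using st by (simp add: mult.assoc)
  also have "\<dots> = e * s * (e * x * e) * t * e" using x by simp
  also have "\<dots> = s' * (x * t')" unfolding s'_def t'_def
    by (simp add: mult.assoc)
  finally have 1: "s' * (x * t') = e" by simp
  have s'c: "e * s' * e = s'" unfolding s'_def by (simp add: mult.assoc e ee)
  have t'c: "e * t' * e = t'" unfolding t'_def by (simp add: mult.assoc e ee)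
  have xt'c: "e * (x * t') * e = x * t'"
  proof -
    have "e * (x * t') * e = (e * x) * e * t * (e * e)" unfolding t'_def by (simp add: mult.assoc)
    also have "\<dots> = x * t'" unfolding t'_def by (simp add: ex e mult.assoc)
    finally show ?thesis .
  qed
  have 2: "x * t' * s' = e" using corner_fin_inv[OF e s'c xt'c 1] .
  have ts'c: "e * (t' * s') * e = t' * s'" unfolding s'_def t'_def by (simp add: mult.assoc e ee)
  have 3: "x * (t' * s') = e" using 2 by (simp add: mult.assoc)
  have 4: "t' * s' * x = e" using corner_fin_inv[OF e x ts'c 3] .
  have "x \<in> corner e e" unfolding corner_def using x by (metis (mono_tags, lifting) mem_Collect_eq)
  moreover have "t' * s' \<in> corner e e" unfolding corner_def using ts'c by (metis (mono_tags, lifting) mem_Collect_eq)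
  ultimately show ?thesis unfolding units_corner_def using 3 4 by blast
qed


lemma idem_pow: "x * x = (x::'m::monoid_mult) \<Longrightarrow> k \<ge> 1 \<Longrightarrow> x ^ k = x"
proof (induction k)
  case 0 then show ?case by simp
next
  case (Suc k) then show ?case by (cases k) auto
qed

lemma pow_exists:
  fixes m :: "'m::{monoid_mult,finite}"
  shows "\<exists>n\<ge>1. m ^ n * m ^ n = m ^ n"
proof -
  have "\<not> inj (\<lambda>k::nat. m ^ k)"
  proof
    assume "inj (\<lambda>k::nat. m ^ k)"
    then have "finite (UNIV :: nat set)"
      using finite_imageD[of "\<lambda>k::nat. m ^ k" UNIV] finite_UNIV[where 'a='m]
      by (metis finite_subset subset_UNIV)
    then show False by simp
  qed
  then obtain i j :: nat where ij: "i \<noteq> j" "m ^ i = m ^ j" unfolding inj_def by blast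
  obtain a b :: nat where ab: "a < b" "m ^ a = m ^ b"
    using ij by (metis linorder_neq_iff)
  define p where "p = b - a"
  have p1: "p \<ge> 1" using ab unfolding p_def by simp
  have shift: "m ^ (c + p) = m ^ c" if "a \<le> c" for c
  proof -
    have "m ^ (c + p) = m ^ (c - a) * m ^ b" using that ab unfolding p_def
      by (simp add: power_add[symmetric])
    also have "\<dots> = m ^ (c - a) * m ^ a" using ab by simp
    also have "\<dots> = m ^ c" using that by (simp add: power_add[symmetric])
    finally show ?thesis .
  qed
  have shiftq: "m ^ (c + q * p) = m ^ c" if "a \<le> c" for c q
  proof (induction q)
    case 0 then show ?case by simp
  next
    case (Suc q)
    have "m ^ (c + Suc q * p) = m ^ ((c + q * p) + p)" by (simp add: algebra_simps)
    also have "\<dots> = m ^ (c + q * p)" using shift[of "c + q * p"] that by simp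
    finally show ?case using Suc by simp
  qed
  define n where "n = (a + 1) * p"
  have "(a + 1) * 1 \<le> (a + 1) * p" using p1 by (rule mult_le_mono2)
  then have n1: "n \<ge> 1" and na: "a \<le> n" unfolding n_def by simp_all
  have "m ^ n * m ^ n = m ^ (n + (a + 1) * p)" unfolding n_def by (simp add: power_add)
  also have "\<dots> = m ^ n" using shiftq[OF na, of "a + 1"] by simp
  finally show ?thesis using n1 by blast
qed

lemma pow_idem_unique:
  fixes m :: "'m::monoid_mult"
  assumes "a \<ge> 1" "b \<ge> 1" "m ^ a * m ^ a = m ^ a" "m ^ b * m ^ b = m ^ b"
  shows "m ^ a = m ^ b"
proof -
  have "m ^ a = (m ^ a) ^ b" using idem_pow assms by metis
  also have "\<dots> = (m ^ b) ^ a" by (simp add: power_mult[symmetric] mult.commute)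
  also have "\<dots> = m ^ b" using idem_pow assms by metis
  finally show ?thesis .
qed

lemma omega_props:
  fixes m :: "'m::{monoid_mult,finite}"
  shows "omega m * omega m = omega m \<and> (\<exists>n\<ge>1. omega m = m ^ n)"
proof -
  obtain n where n: "n \<ge> 1" "m ^ n * m ^ n = m ^ n" using pow_exists by blast
  have "(THE e. e * e = e \<and> (\<exists>n\<ge>1. e = m ^ n)) * (THE e. e * e = e \<and> (\<exists>n\<ge>1. e = m ^ n)) = (THE e. e * e = e \<and> (\<exists>n\<ge>1. e = m ^ n)) \<and> (\<exists>n\<ge>1. (THE e. e * e = e \<and> (\<exists>n\<ge>1. e = m ^ n)) = m ^ n)"
    apply (rule theI[of _ "m ^ n"])
    using n apply blast
    using n pow_idem_unique by metis
  then show ?thesis unfolding omega_def .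
qed

lemma omega_idem: "omega m * omega (m::'m::{monoid_mult,finite}) = omega m"
  using omega_props by blast

lemma sigma_sub: "sigma (m::'m::{monoid_mult,finite}) \<subseteq> ideal2 m"
proof -
  obtain n where n: "n \<ge> 1" "omega m = m ^ n" using omega_props by blast
  then obtain k where "n = Suc k" by (cases n) auto
  then have "omega m = m * m ^ k" using n by simp
  then have "omega m \<in> ideal2 m" using in_ideal2_mult_right by metis
  then show ?thesis unfolding sigma_def by (rule ideal2_sub)
qed

definition rect :: "'m::monoid_mult itself \<Rightarrow> bool" where "rect t = rectangular t"

lemma rectD:
  assumes "rectangular TYPE('m::monoid_mult)" "u * u = u" "v * v = v" "e * e = (e::'m)"
    "ideal2 u = ideal2 e" "ideal2 v = ideal2 e"
  shows "u * v * (u * v) = u * v" "ideal2 (u * v) = ideal2 e"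
  using assms unfolding rectangular_def idems_def by blast+

locale rmon =
  fixes e :: "'m::{monoid_mult,finite}"
  assumes rect: "rectangular TYPE('m)" and e: "e * e = e"
begin

lemma rinv: assumes a: "e * a = a" and up: "e \<in> ideal2 a" shows "\<exists>w. a * w = e"
proof -
  obtain s t where st: "e = s * a * t" using up by (auto simp: ideal2_iff)
  define y where "y = a * t * e"
  have yc: "e * y * e = y" unfolding y_def using a e by (simp add: mult.assoc lassoc[OF a] idem_ee)
  have "e = e * e * e" using e by simp
  also have "\<dots> = (e * s) * y * 1" unfolding y_def using st by (simp add: mult.assoc)
  finally have "e \<in> ideal2 y" by (rule ideal2_I)
  then have "y \<in> units_corner e" using stab[OF e yc] by blast
  then obtain h where "y * h = e" unfolding units_corner_def by blast
  then have "a * (t * e * h) = e" unfolding y_def by (simp add: mult.assoc)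
  then show ?thesis by blast
qed

lemma linv: assumes b: "b * e = b" and up: "e \<in> ideal2 b" shows "\<exists>z. z * b = e"
proof -
  obtain s t where st: "e = s * b * t" using up by (auto simp: ideal2_iff)
  define y where "y = e * s * b"
  have yc: "e * y * e = y" unfolding y_def using b e by (simp add: mult.assoc lassoc[OF b] idem_ee)
  have "e = e * e * e" using e by simp
  also have "\<dots> = 1 * y * (t * e)" unfolding y_def using st by (simp add: mult.assoc)
  finally have "e \<in> ideal2 y" by (rule ideal2_I)
  then have "y \<in> units_corner e" using stab[OF e yc] by blast
  then obtain h where "h * y = e" unfolding units_corner_def by blast
  then have "(h * e * s) * b = e" unfolding y_def by (simp add: mult.assoc)
  then show ?thesis by blast
qed

lemma unit_idem: assumes u: "u * u = u" and g: "g \<in> units_corner u" and gg: "g * g = g"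
  shows "g = u"
proof -
  obtain h where gh: "g * h = u" and gc: "g \<in> corner u u" using g unfolding units_corner_def by blast
  obtain m where "g = u * m * u" using gc unfolding corner_def by blast
  then have "g * u = g" using u by (simp add: mult.assoc)
  then have "g = g * (g * h)" using gh by simp
  also have "\<dots> = g * h" using gg by (simp add: mult.assoc[symmetric])
  finally show ?thesis using gh by simp
qed

lemma RB1:
  assumes u: "u * u = u" "ideal2 u = ideal2 e" and v: "v * v = v" "ideal2 v = ideal2 e"
  shows "u * v * u = u"
proof -
  have uv: "u * v * (u * v) = u * v" "ideal2 (u * v) = ideal2 e" using rectD[OF rect u(1) v(1) e u(2) v(2)] by auto
  have uvu: "u * v * u * (u * v * u) = u * v * u" "ideal2 (u * v * u) = ideal2 e"
    using rectD[OF rect uv(1) u(1) e uv(2) u(2)] by auto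
  have c: "u * (u * v * u) * u = u * v * u" using u by (simp add: mult.assoc idem_ee)
  have "u \<in> ideal2 (u * v * u)" using uvu(2) u(2) ideal2_self by metis
  then have "u * v * u \<in> units_corner u" using stab[OF u(1) c] by blast
  then show ?thesis using unit_idem[OF u(1) _ uvu(1)] by blast
qed

lemma RB2:
  assumes u: "u * u = u" "ideal2 u = ideal2 e" and v: "v * v = v" "ideal2 v = ideal2 e"
    and z: "z * z = z" "ideal2 z = ideal2 e"
  shows "u * z * v = u * v"
proof -
  have zv: "z * v * (z * v) = z * v" "ideal2 (z * v) = ideal2 e" using rectD[OF rect z(1) v(1) e z(2) v(2)] by auto
  have "u * z * v = u * z * (v * u * v)" using RB1[OF v u] by simp
  also have "\<dots> = (u * (z * v) * u) * v" by (simp add: mult.assoc)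
  also have "\<dots> = u * v" using RB1[OF u zv] by simp
  finally show ?thesis .
qed

lemma e_J: "ideal2 e = ideal2 e" by simp

lemma mk_l:
  assumes a: "e * a = a" and w: "a * w = e"
  shows "(w * a) * (w * a) = w * a" "ideal2 (w * a) = ideal2 e" "a * (w * a) = a"
proof -
  show ll: "(w * a) * (w * a) = w * a"
  proof -
    have "(w * a) * (w * a) = w * (a * w) * a" by (simp add: mult.assoc)
    then show ?thesis using w a by (simp add: mult.assoc)
  qed
  show al: "a * (w * a) = a" using w a by (simp add: mult.assoc[symmetric])
  have li: "w * a \<in> ideal2 a" by (rule in_ideal2_mult_left)
  have "a \<in> ideal2 e" using a in_ideal2_mult_right by metis
  then have l1: "w * a \<in> ideal2 e" using li ideal2_trans by blast
  have "e = a * (w * a) * w" using al w by simp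
  then have "e \<in> ideal2 (w * a)" by (metis ideal2_I)
  then show "ideal2 (w * a) = ideal2 e" using l1 ideal2_eq_iff by blast
qed

lemma mk_r:
  assumes b: "b * e = b" and z: "z * b = e"
  shows "(b * z) * (b * z) = b * z" "ideal2 (b * z) = ideal2 e" "(b * z) * b = b"
proof -
  show "(b * z) * (b * z) = b * z"
  proof -
    have "(b * z) * (b * z) = b * (z * b) * z" by (simp add: mult.assoc)
    then show ?thesis using z b by (simp add: mult.assoc)
  qed
  show rb: "(b * z) * b = b" using z b by (simp add: mult.assoc)
  have ri: "b * z \<in> ideal2 b" by (rule in_ideal2_mult_right)
  have "b \<in> ideal2 e" using b in_ideal2_mult_left by metis
  then have r1: "b * z \<in> ideal2 e" using ri ideal2_trans by blast
  have "e = z * (b * z) * b" using rb z by (simp add: mult.assoc)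
  then have "e \<in> ideal2 (b * z)" by (metis ideal2_I)
  then show "ideal2 (b * z) = ideal2 e" using r1 ideal2_eq_iff by blast
qed

lemma CL:
  assumes a: "e * a = a" "e \<in> ideal2 a" and b: "b * e = b" "e \<in> ideal2 b"
  shows "e \<in> ideal2 (a * b)"
proof -
  obtain w where w: "a * w = e" using rinv[OF a] by blast
  obtain z where z: "z * b = e" using linv[OF b] by blast
  note l = mk_l[OF a(1) w] and r = mk_r[OF b(1) z]
  have lr: "ideal2 (w * a * (b * z)) = ideal2 e" using rectD[OF rect l(1) r(1) e l(2) r(2)] by simp
  have "w * a * (b * z) = w * (a * b) * z" by (simp add: mult.assoc)
  then have "w * a * (b * z) \<in> ideal2 (a * b)" by (metis ideal2_I)
  moreover have "e \<in> ideal2 (w * a * (b * z))" using lr ideal2_self by metis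
  ultimately show ?thesis using ideal2_trans by blast
qed

lemma L4:
  assumes a: "e * a = a" "e \<in> ideal2 a" and b: "b * e = b" "e \<in> ideal2 b"
  shows "a * b = a * e * b"
proof -
  obtain w where w: "a * w = e" using rinv[OF a] by blast
  obtain z where z: "z * b = e" using linv[OF b] by blast
  note l = mk_l[OF a(1) w] and r = mk_r[OF b(1) z]
  have "a * e * b = a * (w * a) * e * ((b * z) * b)" using l(3) r(3) by simp
  also have "\<dots> = a * ((w * a) * e * (b * z)) * b" by (simp add: mult.assoc)
  also have "\<dots> = a * ((w * a) * (b * z)) * b" using RB2[OF l(1,2) r(1,2) e e_J] by simp
  also have "\<dots> = (a * (w * a)) * ((b * z) * b)" by (simp add: mult.assoc)
  finally show ?thesis using l(3) r(3) by simp
qed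

lemma P_imp_Q:
  assumes P: "e \<in> ideal2 (e * m * e)"
  shows "e \<in> ideal2 (omega m)"
proof -
  have em: "e \<in> ideal2 (e * m)" using P up_right by blast
  have me: "e \<in> ideal2 (m * e)" using P up_left[of e e "m * e"] by (simp add: mult.assoc)
  have me2: "m * e * e = m * e" using e by (simp add: mult.assoc)
  have k: "e \<in> ideal2 (e * m ^ Suc k)" for k
  proof (induction k)
    case 0 then show ?case using em by simp
  next
    case (Suc k)
    have ea: "e * (e * m ^ Suc k) = e * m ^ Suc k" using e by (simp add: idem_ee)
    have "e \<in> ideal2 (e * m ^ Suc k * (m * e))" using CL[OF ea Suc me2 me] .
    moreover have "e * m ^ Suc k * (m * e) = e * m ^ Suc (Suc k) * e"
      by (simp only: power_Suc2[of m "Suc k"] mult.assoc)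
    ultimately show ?case using up_right by metis
  qed
  obtain n where n: "n \<ge> 1" "omega m = m ^ n" using omega_props by blast
  then obtain j where "n = Suc j" by (cases n) auto
  then show ?thesis using k[of j] n up_left by metis
qed

lemma Q_imp_P:
  assumes Q: "e \<in> ideal2 (omega m)"
  shows "e \<in> ideal2 (e * m * e)"
proof -
  define f where "f = omega m"
  have ff: "f * f = f" unfolding f_def using omega_idem .
  obtain n where n: "n \<ge> 1" "f = m ^ n" unfolding f_def using omega_props by blast
  obtain x y where xy: "e = x * f * y" using Q unfolding f_def by (auto simp: ideal2_iff)
  define u where "u = f * y * e"
  define v where "v = e * x * f"
  have "v * u = e * (x * f * y) * e" unfolding u_def v_def by (simp add: mult.assoc idem_ee[OF ff])
  also have "\<dots> = e" using xy e by simp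
  finally have vu: "v * u = e" .
  have ue: "u * e = u" unfolding u_def using e by (simp add: mult.assoc)
  define g where "g = u * v"
  have "g * g = u * (v * u) * v" unfolding g_def by (simp only: mult.assoc)
  then have gg: "g * g = g" using vu ue unfolding g_def by simp
  have gJ1: "g \<in> ideal2 e" unfolding g_def u_def v_def by (rule ideal2_I[of _ "f * y" _ "x * f"]) (simp add: mult.assoc idem_ee[OF e])
  have "v * g * u = (v * u) * (v * u)" unfolding g_def by (simp add: mult.assoc)
  then have "e = v * g * u" using vu e by simp
  then have gJ2: "e \<in> ideal2 g" by (metis ideal2_I)
  have gJ: "ideal2 g = ideal2 e" using gJ1 gJ2 ideal2_eq_iff by blast
  have fg: "f * g = g" unfolding g_def u_def using ff by (simp add: mult.assoc[symmetric])
  have gf: "g * f = g" unfolding g_def v_def using ff by (simp add: mult.assoc)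
  have eg: "ideal2 (e * g) = ideal2 e" using rectD[OF rect e gg e e_J gJ] by simp
  have ge: "ideal2 (g * e) = ideal2 e" using rectD[OF rect gg e e gJ e_J] by simp
  have "e \<in> ideal2 (e * f * g)" using eg fg ideal2_self by (metis mult.assoc)
  then have ef: "e \<in> ideal2 (e * f)" using up_right by blast
  have "e \<in> ideal2 (g * f * e)" using ge gf ideal2_self by metis
  then have fe: "e \<in> ideal2 (f * e)" using up_left[of e g "f * e"] by (simp add: mult.assoc)
  have "e \<in> ideal2 (e * f * (f * e))"
    by (rule CL[of "e * f" "f * e"]) (use ef fe e in \<open>simp_all add: mult.assoc idem_ee\<close>)
  moreover have "e * f * (f * e) = e * m ^ n * e"
  proof -
    have "e * f * (f * e) = e * (f * f) * e" by (simp only: mult.assoc)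
    then show ?thesis using ff n(2) by simp
  qed
  ultimately have efe: "e \<in> ideal2 (e * m ^ n * e)" by simp
  obtain j where j: "n = Suc j" using n by (cases n) auto
  have "e * m ^ n * e = (e * m) * (m ^ j * e)" using j by (simp add: mult.assoc)
  then have em: "e \<in> ideal2 (e * m)" using efe up_right by metis
  show "e \<in> ideal2 (e * m * e)"
    by (rule CL[of "e * m" "e"]) (use e em in \<open>simp_all add: mult.assoc idem_ee ideal2_self\<close>)
qed

lemma PQ: "e \<in> ideal2 (omega m) \<longleftrightarrow> e \<in> ideal2 (e * m * e)"
  using P_imp_Q Q_imp_P by blast

lemma Q_unit: "e \<in> ideal2 (omega m) \<Longrightarrow> e * m * e \<in> units_corner e"
  using PQ stab[OF e] e by (metis mult.assoc idem_ee)

lemma Q_not: "e \<notin> ideal2 (omega m) \<Longrightarrow> e \<notin> ideal2 (e * m * e)"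
  using PQ by blast

lemma Q_mult: "e \<in> ideal2 (omega (m * n)) \<longleftrightarrow> e \<in> ideal2 (omega m) \<and> e \<in> ideal2 (omega n)"
proof -
  have ee: "e * (e * z) = e * z" for z using idem_ee[OF e] .
  have "e \<in> ideal2 (e * (m * n) * e) \<longleftrightarrow> e \<in> ideal2 (e * m * e) \<and> e \<in> ideal2 (e * n * e)"
  proof
    assume P: "e \<in> ideal2 (e * (m * n) * e)"
    have 1: "e * (m * n) * e = (e * m) * (n * e)" by (simp add: mult.assoc)
    have em: "e \<in> ideal2 (e * m)" using P 1 up_right by metis
    have ne: "e \<in> ideal2 (n * e)" using P 1 up_left by metis
    have "e \<in> ideal2 (e * m * e)"
      by (rule CL[of "e * m" "e"]) (use em e in \<open>simp_all add: mult.assoc ee ideal2_self\<close>)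
    moreover have "e \<in> ideal2 (e * (n * e))"
      by (rule CL[of "e" "n * e"]) (use ne e in \<open>simp_all add: mult.assoc ee ideal2_self\<close>)
    ultimately show "e \<in> ideal2 (e * m * e) \<and> e \<in> ideal2 (e * n * e)" by (simp add: mult.assoc)
  next
    assume P: "e \<in> ideal2 (e * m * e) \<and> e \<in> ideal2 (e * n * e)"
    have em: "e \<in> ideal2 (e * m)" using P up_right by metis
    have ne: "e \<in> ideal2 (n * e)" using P up_left[of e e "n * e"] by (simp add: mult.assoc)
    have "e \<in> ideal2 ((e * m) * (n * e))"
      by (rule CL[of "e * m" "n * e"]) (use em ne e in \<open>simp_all add: mult.assoc ee\<close>)
    then show "e \<in> ideal2 (e * (m * n) * e)" by (simp add: mult.assoc)
  qed
  then show ?thesis using PQ by blast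
qed

lemma Q_hom:
  assumes "e \<in> ideal2 (omega m)" "e \<in> ideal2 (omega n)"
  shows "e * (m * n) * e = (e * m * e) * (e * n * e)"
proof -
  have ee: "e * (e * z) = e * z" for z using idem_ee[OF e] .
  have em: "e \<in> ideal2 (e * m)" using assms PQ up_right by metis
  have ne: "e \<in> ideal2 (n * e)" using assms PQ up_left[of e e "n * e"] by (simp add: mult.assoc)
  have "(e * m) * (n * e) = (e * m) * e * (n * e)"
    by (rule L4) (use em ne e in \<open>simp_all add: mult.assoc ee\<close>)
  then show ?thesis using e by (simp add: mult.assoc ee)
qed

lemma unit_Q: assumes g: "g \<in> units_corner e" shows "e \<in> ideal2 (omega g)" "e * g * e = g"
proof -
  obtain h m where gh: "g * h = e" and gm: "g = e * m * e" using g unfolding units_corner_def corner_def by blast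
  show ege: "e * g * e = g" using gm e by (simp add: mult.assoc idem_ee)
  have "e \<in> ideal2 g" using gh by (metis ideal2_I mult_1_left)
  then show "e \<in> ideal2 (omega g)" using PQ ege by simp
qed

lemma unit_e: "e \<in> units_corner e"
proof -
  have "e \<in> corner e e" unfolding corner_def using e by (metis (mono_tags, lifting) mem_Collect_eq mult_1_right)
  then show ?thesis unfolding units_corner_def using e by blast
qed

lemma Q_e: "e \<in> ideal2 (omega e)"
  using PQ e ideal2_self by (simp add: mult.assoc)

end






locale M14 =
  fixes sc :: "'k::field \<Rightarrow> 'a::ab_group_add \<Rightarrow> 'a"
    and X Y :: "'m::{monoid_mult,finite} set"
    and eX eY :: 'm
    and lY :: "'m \<Rightarrow> 'a \<Rightarrow> 'a"
    and rX :: "'a \<Rightarrow> 'm \<Rightarrow> 'a"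
  assumes rect: "rectangular TYPE('m)"
    and eXi: "eX * eX = eX" and eYi: "eY * eY = eY"
    and Xd: "ideal2 eX = X" and Yd: "ideal2 eY = Y"
    and XY: "\<not> X \<subseteq> Y" and YX: "\<not> Y \<subseteq> X"
    and gb: "group_bimodule sc (units_corner eY) eY (units_corner eX) eX lY rX"
begin

sublocale RX: rmon eX using rect eXi by unfold_locales
sublocale RY: rmon eY using rect eYi by unfold_locales
sublocale V: vector_space sc using gb unfolding group_bimodule_def by (elim conjE) (simp)

abbreviation "GY \<equiv> units_corner eY"
abbreviation "GX \<equiv> units_corner eX"
abbreviation "C \<equiv> corner eY eX"
abbreviation "l \<equiv> lact Y eY lY"
abbreviation "r \<equiv> ract X eX rX"

lemma lY_add: "g \<in> GY \<Longrightarrow> lY g (a + b) = lY g a + lY g b"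
  using gb unfolding group_bimodule_def by (elim conjE) (simp)
lemma lY_sc: "g \<in> GY \<Longrightarrow> lY g (sc c a) = sc c (lY g a)"
  using gb unfolding group_bimodule_def by (elim conjE) (simp)
lemma lY_e: "lY eY a = a"
  using gb unfolding group_bimodule_def by (elim conjE) (simp)
lemma lY_mult: "g \<in> GY \<Longrightarrow> h \<in> GY \<Longrightarrow> lY (g * h) a = lY g (lY h a)"
  using gb unfolding group_bimodule_def by (elim conjE) (simp)
lemma rX_add: "h \<in> GX \<Longrightarrow> rX (a + b) h = rX a h + rX b h"
  using gb unfolding group_bimodule_def by (elim conjE) (simp)
lemma rX_sc: "h \<in> GX \<Longrightarrow> rX (sc c a) h = sc c (rX a h)"
  using gb unfolding group_bimodule_def by (elim conjE) (simp)
lemma rX_e: "rX a eX = a"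
  using gb unfolding group_bimodule_def by (elim conjE) (simp)
lemma rX_mult: "g \<in> GX \<Longrightarrow> h \<in> GX \<Longrightarrow> rX a (g * h) = rX (rX a g) h"
  using gb unfolding group_bimodule_def by (elim conjE) (simp)
lemma lr_comm0: "g \<in> GY \<Longrightarrow> h \<in> GX \<Longrightarrow> lY g (rX a h) = rX (lY g a) h"
  using gb unfolding group_bimodule_def by (elim conjE) (simp)

lemma lY_zero: "g \<in> GY \<Longrightarrow> lY g 0 = 0"
  using lY_add[of g 0 0] by simp
lemma lY_minus: "g \<in> GY \<Longrightarrow> lY g (- a) = - lY g a"
proof -
  assume g: "g \<in> GY"
  have "lY g a + lY g (- a) = 0" using lY_add[OF g, of a "- a"] lY_zero[OF g] by simp
  then show ?thesis by (rule minus_unique[symmetric])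
qed
lemma lY_diff: "g \<in> GY \<Longrightarrow> lY g (a - b) = lY g a - lY g b"
  using lY_add[of g a "- b"] lY_minus by simp
lemma rX_zero: "h \<in> GX \<Longrightarrow> rX 0 h = 0"
  using rX_add[of h 0 0] by simp
lemma rX_minus: "h \<in> GX \<Longrightarrow> rX (- a) h = - rX a h"
proof -
  assume h: "h \<in> GX"
  have "rX a h + rX (- a) h = 0" using rX_add[OF h, of a "- a"] rX_zero[OF h] by simp
  then show ?thesis by (rule minus_unique[symmetric])
qed
lemma rX_diff: "h \<in> GX \<Longrightarrow> rX (a - b) h = rX a h - rX b h"
  using rX_add[of h a "- b"] rX_minus by simp

lemma lY_sum: "g \<in> GY \<Longrightarrow> lY g (\<Sum>i\<in>I. f i) = (\<Sum>i\<in>I. lY g (f i))"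
  by (induction I rule: infinite_finite_induct) (simp_all add: lY_zero lY_add)
lemma rX_sum: "h \<in> GX \<Longrightarrow> rX (\<Sum>i\<in>I. f i) h = (\<Sum>i\<in>I. rX (f i) h)"
  by (induction I rule: infinite_finite_induct) (simp_all add: rX_zero rX_add)

lemma QY_iff: "Y \<subseteq> sigma m \<longleftrightarrow> eY \<in> ideal2 (omega m)"
  unfolding sigma_def Yd[symmetric] using ideal2_sub ideal2_self by blast
lemma QX_iff: "X \<subseteq> sigma m \<longleftrightarrow> eX \<in> ideal2 (omega m)"
  unfolding sigma_def Xd[symmetric] using ideal2_sub ideal2_self by blast

lemma l_def': "l m a = (if eY \<in> ideal2 (omega m) then lY (eY * m * eY) a else 0)"
  unfolding lact_def QY_iff ..
lemma r_def': "r a m = (if eX \<in> ideal2 (omega m) then rX a (eX * m * eX) else 0)"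
  unfolding ract_def QX_iff ..

lemma l_add: "l m (a + b) = l m a + l m b"
  by (simp add: l_def' lY_add RY.Q_unit)
lemma l_zero: "l m 0 = 0"
  by (simp add: l_def' lY_zero RY.Q_unit)
lemma l_minus: "l m (- a) = - l m a"
  by (simp add: l_def' lY_minus RY.Q_unit)
lemma l_diff: "l m (a - b) = l m a - l m b"
  by (simp add: l_def' lY_diff RY.Q_unit)
lemma l_sc: "l m (sc c a) = sc c (l m a)"
  by (simp add: l_def' lY_sc RY.Q_unit)
lemma l_sum: "l m (\<Sum>i\<in>I. f i) = (\<Sum>i\<in>I. l m (f i))"
  by (simp add: l_def' lY_sum RY.Q_unit)
lemma r_add: "r (a + b) m = r a m + r b m"
  by (simp add: r_def' rX_add RX.Q_unit)
lemma r_zero: "r 0 m = 0"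
  by (simp add: r_def' rX_zero RX.Q_unit)
lemma r_minus: "r (- a) m = - r a m"
  by (simp add: r_def' rX_minus RX.Q_unit)
lemma r_diff: "r (a - b) m = r a m - r b m"
  by (simp add: r_def' rX_diff RX.Q_unit)
lemma r_sc: "r (sc c a) m = sc c (r a m)"
  by (simp add: r_def' rX_sc RX.Q_unit)
lemma r_sum: "r (\<Sum>i\<in>I. f i) m = (\<Sum>i\<in>I. r (f i) m)"
  by (simp add: r_def' rX_sum RX.Q_unit)

lemma l_mult: "l (m * n) a = l m (l n a)"
  using RY.Q_mult[of m n] RY.Q_hom[of m n] RY.Q_unit[of m] RY.Q_unit[of n]
  by (auto simp: l_def' lY_mult lY_zero)
lemma r_mult: "r a (m * n) = r (r a m) n"
  using RX.Q_mult[of m n] RX.Q_hom[of m n] RX.Q_unit[of m] RX.Q_unit[of n]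
  by (auto simp: r_def' rX_mult rX_zero)
lemma lr_comm: "l m (r a n) = r (l m a) n"
  using RY.Q_unit[of m] RX.Q_unit[of n]
  by (auto simp: l_def' r_def' lr_comm0 lY_zero rX_zero)

lemma l_unit: "g \<in> GY \<Longrightarrow> l g a = lY g a"
  using RY.unit_Q[of g] by (simp add: l_def')
lemma r_unit: "h \<in> GX \<Longrightarrow> r a h = rX a h"
  using RX.unit_Q[of h] by (simp add: r_def')

lemma l_eY: "l eY a = a"
  using l_unit[OF RY.unit_e] lY_e by simp
lemma r_eX: "r a eX = a"
  using r_unit[OF RX.unit_e] rX_e by simp

lemma l_inX: "s \<in> X \<Longrightarrow> l s a = 0"
proof -
  assume s: "s \<in> X"
  have "eY \<notin> ideal2 (omega s)"
  proof
    assume "eY \<in> ideal2 (omega s)"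
    then have "eY \<in> ideal2 s" using sigma_sub[of s] unfolding sigma_def by blast
    then have "eY \<in> X" using s ideal2_trans Xd by blast
    then have "Y \<subseteq> X" using Yd Xd ideal2_sub by blast
    then show False using YX by simp
  qed
  then show ?thesis by (simp add: l_def')
qed

lemma r_inY: "s \<in> Y \<Longrightarrow> r a s = 0"
proof -
  assume s: "s \<in> Y"
  have "eX \<notin> ideal2 (omega s)"
  proof
    assume "eX \<in> ideal2 (omega s)"
    then have "eX \<in> ideal2 s" using sigma_sub[of s] unfolding sigma_def by blast
    then have "eX \<in> Y" using s ideal2_trans Yd by blast
    then have "X \<subseteq> Y" using Yd Xd ideal2_sub by blast
    then show False using XY by simp
  qed
  then show ?thesis by (simp add: r_def')
qed

lemma l_nabla: "s \<in> nabla Y \<Longrightarrow> l s a = 0"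
proof -
  assume s: "s \<in> nabla Y"
  have "eY \<notin> ideal2 (omega s)"
  proof
    assume "eY \<in> ideal2 (omega s)"
    then have "eY \<in> ideal2 s" using sigma_sub[of s] unfolding sigma_def by blast
    then have "Y \<subseteq> ideal2 s" using Yd ideal2_sub by blast
    then show False using s unfolding nabla_def by simp
  qed
  then show ?thesis by (simp add: l_def')
qed

lemma r_nabla: "s \<in> nabla X \<Longrightarrow> r a s = 0"
proof -
  assume s: "s \<in> nabla X"
  have "eX \<notin> ideal2 (omega s)"
  proof
    assume "eX \<in> ideal2 (omega s)"
    then have "eX \<in> ideal2 s" using sigma_sub[of s] unfolding sigma_def by blast
    then have "X \<subseteq> ideal2 s" using Xd ideal2_sub by blast
    then show False using s unfolding nabla_def by simp
  qed
  then show ?thesis by (simp add: r_def')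
qed

lemma l_eX: "l eX a = 0"
  using l_inX Xd ideal2_self by blast
lemma r_eY: "r a eY = 0"
  using r_inY Yd ideal2_self by blast

lemma C_iff: "s \<in> C \<longleftrightarrow> eY * s * eX = s"
proof
  assume "s \<in> C"
  then obtain m where "s = eY * m * eX" unfolding corner_def by blast
  then show "eY * s * eX = s" using eXi eYi by (simp add: mult.assoc idem_ee)
next
  assume "eY * s * eX = s"
  then show "s \<in> C" unfolding corner_def by (metis (mono_tags, lifting) mem_Collect_eq)
qed

lemma C_mem: "eY * m * eX \<in> C"
  unfolding corner_def by blast

lemma C_XY: "s \<in> C \<Longrightarrow> s \<in> X \<and> s \<in> Y"
  unfolding corner_def Xd[symmetric] Yd[symmetric]
  by (auto intro: ideal2_I[of _ "eY * _" _ 1] ideal2_I[of _ 1 _ "_ * eX"] simp: mult.assoc)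

lemma finite_C: "finite C" by simp


definition Psi :: "('m \<Rightarrow> 'a) \<Rightarrow> ('m \<Rightarrow> 'k) \<Rightarrow> 'a" where
  "Psi d f = (if f \<in> freevs C then (\<Sum>s\<in>C. sc (f s) (d s)) else 0)"

lemma freevs_iff: "f \<in> freevs C \<longleftrightarrow> (\<forall>t. t \<notin> C \<longrightarrow> f t = 0)"
  unfolding freevs_def by simp

lemma delta_freevs: "s \<in> C \<Longrightarrow> delta s \<in> freevs C"
  unfolding freevs_def delta_def by auto

lemma freevs_add: "f \<in> freevs C \<Longrightarrow> g \<in> freevs C \<Longrightarrow> (\<lambda>t. f t + g t) \<in> freevs C"
  unfolding freevs_def by auto
lemma freevs_diff: "f \<in> freevs C \<Longrightarrow> g \<in> freevs C \<Longrightarrow> (\<lambda>t. f t - g t) \<in> freevs C"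
  unfolding freevs_def by auto
lemma freevs_smult: "f \<in> freevs C \<Longrightarrow> (\<lambda>t. c * f t) \<in> freevs C"
  unfolding freevs_def by auto
lemma freevs_sum: "(\<And>i. i \<in> I \<Longrightarrow> g i \<in> freevs C) \<Longrightarrow> (\<lambda>t. \<Sum>i\<in>I. c i * g i t) \<in> freevs C"
  unfolding freevs_def by auto

lemma Psi_delta: "s \<in> C \<Longrightarrow> Psi d (delta s) = d s"
proof -
  assume s: "s \<in> C"
  have "(\<Sum>t\<in>C. sc (delta s t) (d t)) = (\<Sum>t\<in>C. if s = t then d t else 0)"
    by (rule sum.cong) (auto simp: delta_def)
  also have "\<dots> = d s" using s by simp
  finally show ?thesis using delta_freevs[OF s] unfolding Psi_def by auto
qed

lemma Psi_add: "f \<in> freevs C \<Longrightarrow> g \<in> freevs C \<Longrightarrow> Psi d (\<lambda>t. f t + g t) = Psi d f + Psi d g"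
  unfolding Psi_def using freevs_add[of f g]
  by (simp add: V.scale_left_distrib sum.distrib)

lemma Psi_smult: "f \<in> freevs C \<Longrightarrow> Psi d (\<lambda>t. c * f t) = sc c (Psi d f)"
  unfolding Psi_def using freevs_smult[of f c]
  by (simp add: V.scale_sum_right)

lemma Psi_diff: "f \<in> freevs C \<Longrightarrow> g \<in> freevs C \<Longrightarrow> Psi d (\<lambda>t. f t - g t) = Psi d f - Psi d g"
  unfolding Psi_def using freevs_diff[of f g]
  by (simp add: V.scale_left_diff_distrib sum_subtractf)

lemma Psi_lin:
  assumes I: "finite I" and g: "\<And>i. i \<in> I \<Longrightarrow> g i \<in> freevs C"
  shows "Psi d (\<lambda>t. \<Sum>i\<in>I. c i * g i t) = (\<Sum>i\<in>I. sc (c i) (Psi d (g i)))"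
proof -
  have "(\<Sum>s\<in>C. sc (\<Sum>i\<in>I. c i * g i s) (d s)) = (\<Sum>s\<in>C. \<Sum>i\<in>I. sc (c i) (sc (g i s) (d s)))"
    by (simp add: V.scale_sum_left)
  also have "\<dots> = (\<Sum>i\<in>I. \<Sum>s\<in>C. sc (c i) (sc (g i s) (d s)))" by (rule sum.swap)
  also have "\<dots> = (\<Sum>i\<in>I. sc (c i) (\<Sum>s\<in>C. sc (g i s) (d s)))" by (simp add: V.scale_sum_right)
  finally show ?thesis unfolding Psi_def using freevs_sum[of I g c] g by simp
qed

lemma finite_Wgen: "finite (W_gen X eX Y eY :: ('m \<Rightarrow> 'c::field) set)"
proof -
  have "W_gen X eX Y eY \<subseteq> (delta ` UNIV) \<union> ((\<lambda>(m, n). (\<lambda>t. delta (eY * m * n * eX) t + delta (eY * m * eY * eX * n * eX) t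
           - delta (eY * m * eY * n * eX) t - delta (eY * m * eX * n * eX) t) :: 'm \<Rightarrow> 'c) ` UNIV)"
    unfolding W_gen_def by auto
  moreover have "finite ((delta ` UNIV) \<union> ((\<lambda>(m, n). (\<lambda>t. delta (eY * m * n * eX) t + delta (eY * m * eY * eX * n * eX) t
           - delta (eY * m * eY * n * eX) t - delta (eY * m * eX * n * eX) t) :: 'm \<Rightarrow> 'c) ` UNIV))"
    by simp
  ultimately show ?thesis by (rule finite_subset)
qed

lemma C_mem': "eY * (m * eX) \<in> C"
  using C_mem[of m] by (simp add: mult.assoc)

lemma Wgen_freevs: "(w :: 'm \<Rightarrow> 'k) \<in> W_gen X eX Y eY \<Longrightarrow> w \<in> freevs C"
proof -
  assume "w \<in> W_gen X eX Y eY"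
  then consider s where "w = delta s" "s \<in> C"
    | m n where "w = (\<lambda>t. delta (eY * m * n * eX) t + delta (eY * m * eY * eX * n * eX) t
           - delta (eY * m * eY * n * eX) t - delta (eY * m * eX * n * eX) t)"
    unfolding W_gen_def by blast
  then show ?thesis
  proof cases
    case 1 then show ?thesis using delta_freevs by simp
  next
    case (2 m n)
    have "eY * m * n * eX \<in> C" "eY * m * eY * eX * n * eX \<in> C" "eY * m * eY * n * eX \<in> C" "eY * m * eX * n * eX \<in> C"
      using C_mem[of "m * n"] C_mem[of "m * eY * eX * n"] C_mem[of "m * eY * n"] C_mem[of "m * eX * n"]
      by (simp_all add: mult.assoc)
    then show ?thesis unfolding 2 by (intro freevs_diff freevs_add delta_freevs)
  qed
qed

lemma Wgen_W: "(w :: 'm \<Rightarrow> 'k) \<in> W_gen X eX Y eY \<Longrightarrow> w \<in> W_XY X eX Y eY"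
proof -
  assume w: "w \<in> W_gen X eX Y eY"
  have "w = (\<lambda>t. \<Sum>w'\<in>W_gen X eX Y eY. (if w' = w then 1 else 0) * w' t)"
  proof
    fix t
    have "(\<Sum>w'\<in>W_gen X eX Y eY. (if w' = w then 1 else 0) * w' t) = (\<Sum>w'\<in>W_gen X eX Y eY. if w' = w then w t else 0)"
      by (rule sum.cong) auto
    also have "\<dots> = w t" using w sum.delta[OF finite_Wgen, of w "\<lambda>_. w t"] by simp
    finally show "w t = (\<Sum>w'\<in>W_gen X eX Y eY. (if w' = w then 1 else 0) * w' t)" by simp
  qed
  then show ?thesis unfolding W_XY_def mem_Collect_eq by (rule exI[of _ "\<lambda>w'. if w' = w then 1 else 0"])
qed

lemma WXY_freevs: "(w :: 'm \<Rightarrow> 'k) \<in> W_XY X eX Y eY \<Longrightarrow> w \<in> freevs C"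
proof -
  assume "w \<in> W_XY X eX Y eY"
  then obtain c where c: "w = (\<lambda>t. \<Sum>w'\<in>W_gen X eX Y eY. c w' * w' t)" unfolding W_XY_def by blast
  show ?thesis unfolding c by (rule freevs_sum) (rule Wgen_freevs)
qed

lemma Psi_W:
  assumes gen: "\<And>w. w \<in> W_gen X eX Y eY \<Longrightarrow> Psi d w = 0" and w: "w \<in> W_XY X eX Y eY"
  shows "Psi d w = 0"
proof -
  obtain c where c: "w = (\<lambda>t. \<Sum>w'\<in>W_gen X eX Y eY. c w' * w' t)" using w unfolding W_XY_def by blast
  show ?thesis unfolding c using Psi_lin[OF finite_Wgen Wgen_freevs, where d=d and c=c] gen by simp
qed


abbreviation "Der \<equiv> derivations Y eY lY X eX rX"
abbreviation "Inn \<equiv> inner_derivations Y eY lY X eX rX"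

lemma derD: "d \<in> Der \<Longrightarrow> d (x * y) = l x (d y) + r (d x) y"
  unfolding derivations_def by blast

lemma l_eY_right: "l (p * eY) a = l p a"
  by (simp add: l_mult l_eY)
lemma l_eX_right: "l (p * eX) a = 0"
  by (simp add: l_mult l_eX l_zero)

lemma der_W:
  assumes d: "d \<in> Der"
  shows "d (eY * m * n * eX) + d (eY * m * eY * eX * n * eX) - d (eY * m * eY * n * eX) - d (eY * m * eX * n * eX) = 0"
proof -
  define p where "p = eY * m"
  define q where "q = n * eX"
  have e1: "eY * m * n * eX = p * q" unfolding p_def q_def by (simp add: mult.assoc)
  have e3: "eY * m * eY * n * eX = (p * eY) * q" unfolding p_def q_def by (simp add: mult.assoc)
  have e5: "eY * m * eX * n * eX = (p * eX) * q" unfolding p_def q_def by (simp add: mult.assoc)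
  have e7: "eY * m * eY * eX * n * eX = (p * eY * eX) * q" unfolding p_def q_def by (simp add: mult.assoc)
  have h1: "d (eY * m * n * eX) = l p (d q) + r (d p) q"
    using derD[OF d, of p q] e1 by simp
  have h2: "d (p * eY) = l p (d eY)"
    using derD[OF d, of p eY] by (simp add: r_eY)
  have h3: "d (eY * m * eY * n * eX) = l p (d q) + r (l p (d eY)) q"
    using derD[OF d, of "p * eY" q] h2 l_eY_right e3 by simp
  have h4: "d (p * eX) = l p (d eX) + d p"
    using derD[OF d, of p eX] by (simp add: r_eX)
  have h5: "d (eY * m * eX * n * eX) = r (l p (d eX) + d p) q"
    using derD[OF d, of "p * eX" q] h4 l_eX_right e5 by simp
  have h6: "d (p * eY * eX) = l p (d eX) + l p (d eY)"
    using derD[OF d, of "p * eY" eX] h2 l_eY_right by (simp add: r_eX)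
  have h7: "d (eY * m * eY * eX * n * eX) = r (l p (d eX) + l p (d eY)) q"
    using derD[OF d, of "p * eY * eX" q] h6 l_eX_right[of "p * eY"] e7 by simp
  show ?thesis unfolding h1 h3 h5 h7 by (simp add: r_add)
qed

lemma der_nabla:
  assumes d: "d \<in> Der" and s: "s \<in> nabla_prod Y X"
  shows "d s = 0"
proof -
  obtain a b where ab: "s = a * b" "a \<in> nabla Y" "b \<in> nabla X" using s unfolding nabla_prod_def by blast
  show ?thesis using derD[OF d, of a b] ab l_nabla r_nabla by simp
qed

lemma ideal2_mult_closed: "s \<in> ideal2 e \<Longrightarrow> a * s * b \<in> ideal2 e"
  using in_ideal2_mult_both ideal2_trans by blast

lemma der_equiv:
  assumes d: "d \<in> Der" and g: "g \<in> GY" and h: "h \<in> GX" and s: "s \<in> C"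
  shows "d (g * s * h) = lY g (rX (d s) h)"
proof -
  have sXY: "s \<in> X" "s \<in> Y" using C_XY[OF s] by auto
  have shY: "s * h \<in> Y" using ideal2_mult_closed[of s eY 1 h] sXY Yd by simp
  have "d (s * h) = r (d s) h" using derD[OF d, of s h] l_inX[OF sXY(1)] by simp
  then have "d (s * h) = rX (d s) h" using r_unit[OF h] by simp
  moreover have "d (g * (s * h)) = l g (d (s * h))" using derD[OF d, of g "s * h"] r_inY[OF shY] by simp
  ultimately show ?thesis using l_unit[OF g] by (simp add: mult.assoc)
qed

lemma gact_delta_sum:
  "gact C g h f t = (\<Sum>s\<in>C. if g * s * h = t then f s else 0)"
  unfolding gact_def ..

lemma unit_mult_C:
  assumes g: "g \<in> GY" and h: "h \<in> GX" and s: "s \<in> C"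
  shows "g * s * h \<in> C"
proof -
  have "eY * g = g" using RY.unit_Q(2)[OF g] idem_cornerE[OF eYi] by blast
  moreover have "h * eX = h" using RX.unit_Q(2)[OF h] idem_cornerE[OF eXi] by blast
  ultimately have "eY * (g * s * h) * eX = g * s * h" by (metis mult.assoc)
  then show ?thesis using C_iff by blast
qed

lemma gact_freevs:
  assumes g: "g \<in> GY" and h: "h \<in> GX"
  shows "gact C g h f \<in> freevs C"
  unfolding freevs_iff gact_def using unit_mult_C[OF g h] by (auto intro!: sum.neutral)

lemma Psi_gact:
  assumes d: "d \<in> Der" and g: "g \<in> GY" and h: "h \<in> GX" and f: "f \<in> freevs C"
  shows "Psi d (gact C g h f) = lY g (rX (Psi d f) h)"
proof -
  have "(\<Sum>t\<in>C. sc (gact C g h f t) (d t)) = (\<Sum>t\<in>C. \<Sum>s\<in>C. if g * s * h = t then sc (f s) (d t) else 0)"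
    unfolding gact_def V.scale_sum_left by (intro sum.cong refl) auto
  also have "\<dots> = (\<Sum>s\<in>C. \<Sum>t\<in>C. if g * s * h = t then sc (f s) (d t) else 0)" by (rule sum.swap)
  also have "\<dots> = (\<Sum>s\<in>C. sc (f s) (d (g * s * h)))"
    by (rule sum.cong) (simp_all add: unit_mult_C[OF g h])
  also have "\<dots> = (\<Sum>s\<in>C. sc (f s) (lY g (rX (d s) h)))"
    by (rule sum.cong) (simp_all add: der_equiv[OF d g h])
  also have "\<dots> = lY g (rX (\<Sum>s\<in>C. sc (f s) (d s)) h)"
    by (simp add: lY_sum[OF g] rX_sum[OF h] lY_sc[OF g] rX_sc[OF h])
  finally show ?thesis unfolding Psi_def using gact_freevs[OF g h, of f] f by auto
qed

lemma Psi_gen: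
  assumes d: "d \<in> Der" and w: "w \<in> W_gen X eX Y eY"
  shows "Psi d w = 0"
proof -
  from w consider s where "w = delta s" "s \<in> nabla_prod Y X \<inter> C"
    | m n where "w = (\<lambda>t. delta (eY * m * n * eX) t + delta (eY * m * eY * eX * n * eX) t
           - delta (eY * m * eY * n * eX) t - delta (eY * m * eX * n * eX) t)"
    unfolding W_gen_def by blast
  then show ?thesis
  proof cases
    case 1 then show ?thesis using Psi_delta der_nabla[OF d] by simp
  next
    case (2 m n)
    have c: "eY * m * n * eX \<in> C" "eY * m * eY * eX * n * eX \<in> C" "eY * m * eY * n * eX \<in> C" "eY * m * eX * n * eX \<in> C"
      using C_mem[of "m * n"] C_mem[of "m * eY * eX * n"] C_mem[of "m * eY * n"] C_mem[of "m * eX * n"]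
      by (simp_all add: mult.assoc)
    note fv = delta_freevs[OF c(1)] delta_freevs[OF c(2)] delta_freevs[OF c(3)] delta_freevs[OF c(4)]
    have "Psi d w = d (eY * m * n * eX) + d (eY * m * eY * eX * n * eX) - d (eY * m * eY * n * eX) - d (eY * m * eX * n * eX)"
      unfolding 2
      by (simp add: Psi_diff Psi_add freevs_add freevs_diff fv Psi_delta c)
    then show ?thesis using der_W[OF d] by simp
  qed
qed

lemma Psi_Hom:
  assumes d: "d \<in> Der"
  shows "Psi d \<in> Hom_V sc X eX Y eY lY rX"
  unfolding Hom_V_def
  using Psi_add Psi_smult Psi_gact[OF d] Psi_W[OF Psi_gen[OF d]]
  by (auto simp: Psi_def)


lemma Psi_plus: "Psi (\<lambda>m. d m + d' m) = (\<lambda>f. Psi d f + Psi d' f)"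
  unfolding Psi_def by (auto simp: V.scale_right_distrib sum.distrib)

lemma Psi_scale: "Psi (\<lambda>m. sc c (d m)) = (\<lambda>f. sc c (Psi d f))"
  unfolding Psi_def by (rule ext) (simp add: V.scale_sum_right mult.commute)

lemma inner_C: "d \<in> Inn \<Longrightarrow> s \<in> C \<Longrightarrow> d s = 0"
  unfolding inner_derivations_def using C_XY l_inX r_inY by fastforce

lemma kernel1: "d \<in> Inn \<Longrightarrow> Psi d = (\<lambda>f. 0)"
proof -
  assume d: "d \<in> Inn"
  show ?thesis unfolding Psi_def by (rule ext) (simp add: inner_C[OF d])
qed

lemma kernel2:
  assumes d: "d \<in> Der" and P: "Psi d = (\<lambda>f. 0)"
  shows "d \<in> Inn"
proof -
  have dC: "d s = 0" if "s \<in> C" for s using Psi_delta[OF that, of d] P by simp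
  define b where "b = d eX"
  define c where "c = d eY"
  have "d (eY * eX) = b + c" using derD[OF d, of eY eX] l_eY r_eX unfolding b_def c_def by (simp add: add.commute)
  moreover have "eY * eX \<in> C" using C_mem[of 1] by simp
  ultimately have bc: "c = - b" using dC by (simp add: eq_neg_iff_add_eq_0 add.commute)
  have "d m = l m (- b) - r (- b) m" for m
  proof -
    have "d (eY * m * eX) = 0" using dC C_mem by blast
    moreover have "d (eY * m * eX) = l (eY * m) b + d (eY * m)"
      using derD[OF d, of "eY * m" eX] r_eX unfolding b_def by simp
    moreover have "l (eY * m) b = l m b" by (simp add: l_mult l_eY)
    moreover have "d (eY * m) = d m + r c m" using derD[OF d, of eY m] l_eY unfolding c_def by simp
    ultimately have "l m b + d m + r c m = 0" by (simp add: add.assoc)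
    then have "d m = - l m b - r c m" by (simp add: algebra_simps eq_neg_iff_add_eq_0)
    then show ?thesis using bc by (simp add: l_minus r_minus)
  qed
  then show ?thesis unfolding inner_derivations_def by blast
qed


lemma gact_delta:
  assumes x: "x \<in> C" and g: "g \<in> GY" and h: "h \<in> GX"
  shows "gact C g h (delta x) = delta (g * x * h)"
proof
  fix t
  have "gact C g h (delta x) t = (\<Sum>s\<in>C. if s = x then (if g * s * h = t then 1 else 0) else 0)"
    unfolding gact_def by (rule sum.cong) (auto simp: delta_def)
  also have "\<dots> = (if g * x * h = t then 1 else 0)" using x by simp
  finally show "gact C g h (delta x) t = delta (g * x * h) t" unfolding delta_def by auto
qed

context
  fixes Phi :: "('m \<Rightarrow> 'k) \<Rightarrow> 'a"
  assumes H: "Phi \<in> Hom_V sc X eX Y eY lY rX"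
begin

lemma HA: "f \<in> freevs C \<Longrightarrow> f' \<in> freevs C \<Longrightarrow> Phi (\<lambda>t. f t + f' t) = Phi f + Phi f'"
  using H unfolding Hom_V_def by blast
lemma HS: "f \<in> freevs C \<Longrightarrow> Phi (\<lambda>t. c * f t) = sc c (Phi f)"
  using H unfolding Hom_V_def by blast
lemma HZ: "f \<notin> freevs C \<Longrightarrow> Phi f = 0"
  using H unfolding Hom_V_def by blast
lemma HW: "w \<in> W_XY X eX Y eY \<Longrightarrow> Phi w = 0"
  using H unfolding Hom_V_def by blast
lemma HG: "g \<in> GY \<Longrightarrow> h \<in> GX \<Longrightarrow> f \<in> freevs C \<Longrightarrow> Phi (gact C g h f) = lY g (rX (Phi f) h)"
  using H unfolding Hom_V_def by blast

lemma HD: assumes f: "f \<in> freevs C" and f': "f' \<in> freevs C"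
  shows "Phi (\<lambda>t. f t - f' t) = Phi f - Phi f'"
proof -
  have e: "(\<lambda>t. f t - f' t) = (\<lambda>t. f t + (\<lambda>t. (-1) * f' t) t)" by simp
  have "Phi (\<lambda>t. f t - f' t) = Phi f + Phi (\<lambda>t. (-1) * f' t)"
    unfolding e by (rule HA[OF f freevs_smult[OF f']])
  also have "Phi (\<lambda>t. (-1) * f' t) = - Phi f'" using HS[OF f', of "-1"] by simp
  finally show ?thesis by simp
qed

lemma H0: "Phi (\<lambda>t. 0) = 0"
proof -
  have z: "(\<lambda>t. 0::'k) \<in> freevs C" unfolding freevs_def by simp
  have "Phi (\<lambda>t. 0 * (0::'k)) = sc 0 (Phi (\<lambda>t. 0))" using HS[OF z, of 0] by simp
  then show ?thesis by simp
qed

lemma Hsum: "S \<subseteq> C \<Longrightarrow> Phi (\<lambda>t. \<Sum>s\<in>S. f s * delta s t) = (\<Sum>s\<in>S. sc (f s) (Phi (delta s)))"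
proof (induction S rule: infinite_finite_induct)
  case (infinite A) then show ?case using H0 by simp
next
  case empty then show ?case using H0 by simp
next
  case (insert x F)
  have xC: "x \<in> C" and FC: "F \<subseteq> C" using insert by auto
  have fv1: "(\<lambda>t. f x * delta x t) \<in> freevs C" by (rule freevs_smult[OF delta_freevs[OF xC]])
  have fv2: "(\<lambda>t. \<Sum>s\<in>F. f s * delta s t) \<in> freevs C"
    by (rule freevs_sum) (use FC delta_freevs in blast)
  have "Phi (\<lambda>t. \<Sum>s\<in>insert x F. f s * delta s t) = Phi (\<lambda>t. (\<lambda>t. f x * delta x t) t + (\<lambda>t. \<Sum>s\<in>F. f s * delta s t) t)"
    using insert by simp
  also have "\<dots> = Phi (\<lambda>t. f x * delta x t) + Phi (\<lambda>t. \<Sum>s\<in>F. f s * delta s t)"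
    by (rule HA[OF fv1 fv2])
  also have "\<dots> = sc (f x) (Phi (delta x)) + (\<Sum>s\<in>F. sc (f s) (Phi (delta s)))"
    using HS[OF delta_freevs[OF xC]] insert FC by simp
  finally show ?case using insert by simp
qed

lemma Hexp: assumes f: "f \<in> freevs C" shows "Phi f = (\<Sum>s\<in>C. sc (f s) (Phi (delta s)))"
proof -
  have "f = (\<lambda>t. \<Sum>s\<in>C. f s * delta s t)"
  proof
    fix t
    have "(\<Sum>s\<in>C. f s * delta s t) = (\<Sum>s\<in>C. if s = t then f t else 0)"
      by (rule sum.cong) (auto simp: delta_def)
    also have "\<dots> = f t" using f by (auto simp: freevs_def)
    finally show "f t = (\<Sum>s\<in>C. f s * delta s t)" by simp
  qed
  then have "Phi f = Phi (\<lambda>t. \<Sum>s\<in>C. f s * delta s t)" by simp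
  also have "\<dots> = (\<Sum>s\<in>C. sc (f s) (Phi (delta s)))" using Hsum by simp
  finally show ?thesis .
qed

lemma Hnab: "s \<in> nabla_prod Y X \<Longrightarrow> s \<in> C \<Longrightarrow> Phi (delta s) = 0"
  using HW Wgen_W unfolding W_gen_def by blast

definition phi where "phi m = Phi (delta (eY * m * eX))"

lemma eY_in_nablaX: "eY * n \<in> nabla X"
proof -
  have "X \<subseteq> ideal2 (eY * n) \<Longrightarrow> False"
  proof -
    assume "X \<subseteq> ideal2 (eY * n)"
    moreover have "ideal2 (eY * n) \<subseteq> Y" using Yd ideal2_sub in_ideal2_mult_right by blast
    ultimately show False using XY by blast
  qed
  then show ?thesis unfolding nabla_def by blast
qed

lemma eX_in_nablaY: "n * eX \<in> nabla Y"
proof -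
  have "Y \<subseteq> ideal2 (n * eX) \<Longrightarrow> False"
  proof -
    assume "Y \<subseteq> ideal2 (n * eX)"
    moreover have "ideal2 (n * eX) \<subseteq> X" using Xd ideal2_sub in_ideal2_mult_left by blast
    ultimately show False using YX by blast
  qed
  then show ?thesis unfolding nabla_def by blast
qed

lemma A1: "Phi (delta (eY * m * eY * n * eX)) = l m (phi n)"
proof (cases "eY \<in> ideal2 (omega m)")
  case True
  define g where "g = eY * m * eY"
  have g: "g \<in> GY" using RY.Q_unit[OF True] unfolding g_def .
  have x: "eY * n * eX \<in> C" by (rule C_mem)
  have "g * (eY * n * eX) * eX = eY * m * eY * n * eX" unfolding g_def
    using eXi eYi by (simp add: mult.assoc idem_ee)
  then have gd: "gact C g eX (delta (eY * n * eX)) = delta (eY * m * eY * n * eX)"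
    using gact_delta[OF x g RX.unit_e] by simp
  have "Phi (delta (eY * m * eY * n * eX)) = Phi (gact C g eX (delta (eY * n * eX)))"
    by (simp only: gd)
  also have "\<dots> = lY g (rX (phi n) eX)" unfolding phi_def using HG[OF g RX.unit_e delta_freevs[OF x]] .
  also have "\<dots> = l m (phi n)" using True unfolding g_def by (simp add: l_def' rX_e)
  finally show ?thesis .
next
  case False
  have a: "eY * m * eY \<in> nabla Y"
  proof -
    have "eY \<notin> ideal2 (eY * m * eY)" using RY.Q_not[OF False] .
    then show ?thesis unfolding nabla_def Yd[symmetric] using ideal2_self by blast
  qed
  have b: "eY * (n * eX) \<in> nabla X" by (rule eY_in_nablaX)
  have "eY * m * eY * n * eX = (eY * m * eY) * (eY * (n * eX))" using eYi by (simp add: mult.assoc idem_ee)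
  then have "eY * m * eY * n * eX \<in> nabla_prod Y X" unfolding nabla_prod_def using a b by blast
  moreover have "eY * m * eY * n * eX \<in> C" using C_mem[of "m * eY * n"] by (simp add: mult.assoc)
  ultimately show ?thesis using Hnab False by (simp add: l_def')
qed

lemma A2: "Phi (delta (eY * m * eX * n * eX)) = r (phi m) n"
proof (cases "eX \<in> ideal2 (omega n)")
  case True
  define h where "h = eX * n * eX"
  have h: "h \<in> GX" using RX.Q_unit[OF True] unfolding h_def .
  have x: "eY * m * eX \<in> C" by (rule C_mem)
  have "eY * (eY * m * eX) * h = eY * m * eX * n * eX" unfolding h_def
    using eXi eYi by (simp add: mult.assoc idem_ee)
  then have gd: "gact C eY h (delta (eY * m * eX)) = delta (eY * m * eX * n * eX)"
    using gact_delta[OF x RY.unit_e h] by simp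
  have "Phi (delta (eY * m * eX * n * eX)) = Phi (gact C eY h (delta (eY * m * eX)))"
    by (simp only: gd)
  also have "\<dots> = lY eY (rX (phi m) h)" unfolding phi_def using HG[OF RY.unit_e h delta_freevs[OF x]] .
  also have "\<dots> = r (phi m) n" using True unfolding h_def by (simp add: r_def' lY_e)
  finally show ?thesis .
next
  case False
  have b: "eX * n * eX \<in> nabla X"
  proof -
    have "eX \<notin> ideal2 (eX * n * eX)" using RX.Q_not[OF False] .
    then show ?thesis unfolding nabla_def Xd[symmetric] using ideal2_self by blast
  qed
  have a: "(eY * m) * eX \<in> nabla Y" by (rule eX_in_nablaY)
  have "eY * m * eX * n * eX = ((eY * m) * eX) * (eX * n * eX)" using eXi by (simp add: mult.assoc idem_ee)
  then have "eY * m * eX * n * eX \<in> nabla_prod Y X" unfolding nabla_prod_def using a b by blast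
  moreover have "eY * m * eX * n * eX \<in> C" using C_mem[of "m * eX * n"] by (simp add: mult.assoc)
  ultimately show ?thesis using Hnab False by (simp add: r_def')
qed

lemma HW2: "phi (m * n) + Phi (delta (eY * m * eY * eX * n * eX)) - Phi (delta (eY * m * eY * n * eX)) - Phi (delta (eY * m * eX * n * eX)) = 0"
proof -
  define w :: "'m \<Rightarrow> 'k" where "w = (\<lambda>t. delta (eY * m * n * eX) t + delta (eY * m * eY * eX * n * eX) t
           - delta (eY * m * eY * n * eX) t - delta (eY * m * eX * n * eX) t)"
  have "w \<in> W_gen X eX Y eY" unfolding W_gen_def w_def by blast
  then have w0: "Phi w = 0" using HW Wgen_W by blast
  have c: "eY * m * n * eX \<in> C" "eY * m * eY * eX * n * eX \<in> C" "eY * m * eY * n * eX \<in> C" "eY * m * eX * n * eX \<in> C"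
    using C_mem[of "m * n"] C_mem[of "m * eY * eX * n"] C_mem[of "m * eY * n"] C_mem[of "m * eX * n"]
    by (simp_all add: mult.assoc)
  note fv = delta_freevs[OF c(1)] delta_freevs[OF c(2)] delta_freevs[OF c(3)] delta_freevs[OF c(4)]
  have "Phi w = Phi (delta (eY * m * n * eX)) + Phi (delta (eY * m * eY * eX * n * eX)) - Phi (delta (eY * m * eY * n * eX)) - Phi (delta (eY * m * eX * n * eX))"
    unfolding w_def by (simp add: HD HA freevs_add freevs_diff fv)
  moreover have "phi (m * n) = Phi (delta (eY * m * n * eX))" unfolding phi_def by (simp add: mult.assoc)
  ultimately show ?thesis using w0 by simp
qed

lemma phi_mult: "phi (m * n) = l m (phi n) + r (phi m) n - l m (r (phi 1) n)"
proof -
  have 1: "Phi (delta (eY * m * eY * eX * n * eX)) = l m (r (phi 1) n)"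
  proof -
    have "Phi (delta (eY * m * eY * eX * n * eX)) = l m (phi (eX * n))"
      using A1[of m "eX * n"] by (simp add: mult.assoc)
    moreover have "phi (eX * n) = r (phi 1) n"
      using A2[of 1 n] unfolding phi_def by (simp add: mult.assoc)
    ultimately show ?thesis by simp
  qed
  show ?thesis using HW2[of m n] A1[of m n] A2[of m n] 1 by (simp add: algebra_simps)
qed

definition dd where "dd m = phi m - l m (phi 1)"

lemma dd_der: "dd \<in> Der"
  unfolding derivations_def mem_Collect_eq
proof (intro allI)
  fix m n
  show "dd (m * n) = l m (dd n) + r (dd m) n"
    unfolding dd_def phi_mult
    by (simp add: l_diff r_diff l_mult lr_comm algebra_simps)
qed

lemma dd_Psi: "Psi dd = Phi"
proof
  fix f
  show "Psi dd f = Phi f"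
  proof (cases "f \<in> freevs C")
    case True
    have "(\<Sum>s\<in>C. sc (f s) (dd s)) = (\<Sum>s\<in>C. sc (f s) (Phi (delta s)))"
    proof (rule sum.cong)
      fix s assume s: "s \<in> C"
      have "dd s = Phi (delta s)" unfolding dd_def phi_def
        using C_iff[of s] s l_inX[of s] C_XY[OF s] by simp
      then show "sc (f s) (dd s) = sc (f s) (Phi (delta s))" by simp
    qed simp
    then show ?thesis unfolding Psi_def using True Hexp[OF True] by simp
  next
    case False
    then show ?thesis unfolding Psi_def using HZ by simp
  qed
qed

end

end

theorem mainTheorem14:
  fixes sc :: "'k::field \<Rightarrow> 'a::ab_group_add \<Rightarrow> 'a"
    and X Y :: "'m::{monoid_mult,finite} set"
    and eX eY :: 'm
    and lY :: "'m \<Rightarrow> 'a \<Rightarrow> 'a"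
    and rX :: "'a \<Rightarrow> 'm \<Rightarrow> 'a"
  assumes "rectangular TYPE('m)"
    and "\<forall>e\<in>idems. splitting_field TYPE('k) (units_corner e) (e::'m)"
    and "X \<in> Lambda" and "Y \<in> Lambda" and "\<not> X \<subseteq> Y" and "\<not> Y \<subseteq> X"
    and "eX \<in> idems" and "ideal2 eX = X" and "eY \<in> idems" and "ideal2 eY = Y"
    and "group_bimodule sc (units_corner eY) eY (units_corner eX) eX lY rX"
  shows "H1_iso sc (derivations Y eY lY X eX rX) (inner_derivations Y eY lY X eX rX)
           (Hom_V sc X eX Y eY lY rX)"
proof -
  interpret M14 sc X Y eX eY lY rX
    using assms unfolding idems_def by unfold_locales auto
  have img: "Psi ` Der = Hom_V sc X eX Y eY lY rX"
  proof
    show "Psi ` Der \<subseteq> Hom_V sc X eX Y eY lY rX" using Psi_Hom by blast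
  next
    show "Hom_V sc X eX Y eY lY rX \<subseteq> Psi ` Der"
    proof
      fix Phi assume H: "Phi \<in> Hom_V sc X eX Y eY lY rX"
      have "Phi = Psi (dd Phi)" using dd_Psi[OF H] by simp
      moreover have "dd Phi \<in> Der" using dd_der[OF H] .
      ultimately show "Phi \<in> Psi ` Der" by blast
    qed
  qed
  show ?thesis unfolding H1_iso_def
    using img Psi_plus Psi_scale kernel1 kernel2 by blast
qed

end
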